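(* Consider the unit-cost Correlated Pandora's Problem (all $c_i=1$) in which all volumes are positive even integers. Let $x$ be an optimal solution of the Unit-Cost Convex Program, and run Clairvoyant Stopping with (Discrete-Time) Poisson Rounding built from $x$. Then its expected objective is at most $4\cdot\mathrm{OPT}$ (i.e., it is $4$-competitive).
   Context: Correlated Pandora's Problem: boxes $[n]$, box $i$ has opening cost $c_i$ (here $c_i=1$) and volume $v_i$; the scenario $v=(v_1,\dots,v_n)$ is drawn from a known, possibly correlated distribution $\mathcal{D}$. Opening a box costs its cost and reveals its volume; the objective of an algorithm is total opening cost plus the volume of the taken box, minimized in expectation. A partially adaptive algorithm fixes the opening order in advance and adaptively decides when to stop (then taking the minimum opened volume); $\mathrm{OPT}$ is the minimum expected objective of a partially adaptive algorithm. Write $x_+=\max\{x,0\}$. Unit-Cost Convex Program: variables $x_i(t)\ge 0$ for $i,t\in[n]$ with $\sum_{i\in[n]}x_i(t)\le 1$ for all $t\in[n]$; minimize $\mathbf{E}_{v\sim\mathcal{D}}\sum_{t=1}^\infty\big(1-\sum_{i\in[n]}\sum_{t'\in[n],\,t'<t-v_i}x_i(t')\big)_+$. Discrete-Time Poisson Rounding: let $\bar x_i(t)=\frac1t\sum_{t'=1}^{\min\{t,n\}}x_i(t')$. Independently at each step $\tau=1,2,\dots$, sample box $i$ with probability $\bar x_i(\lceil\tau/2\rceil)$ (no box with the remaining probability); $\alpha_i$ is the first step at which box $i$ is sampled ($\infty$ if never). Clairvoyant Stopping: sample all $\alpha_i$; let $i^*=\arg\min_{i}(\alpha_i+v_i)$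 (computed using the realized volumes); open boxes one per unit time step in ascending order of $\alpha_i$ and take box $i^*$ as soon as it is opened. The objective is the number of boxes opened plus $v_{i^*}$. *)

theory Defs
  imports "HOL-Probability.Probability"
begin

(* Boxes are 0..<n, time steps t of the program are 1..n.
   A scenario is v :: nat => nat (only v i, i<n, matter). *)

definition valid_order :: "nat \<Rightarrow> nat list \<Rightarrow> bool" where
  "valid_order n \<sigma> \<longleftrightarrow> distinct \<sigma> \<and> set \<sigma> = {..<n}"

(* stop v = number of boxes opened (>= 1, since a box must be taken);
   the decision to stop after k boxes depends only on the first k revealed volumes *)
definition valid_stop :: "nat \<Rightarrow> nat list \<Rightarrow> ((nat \<Rightarrow> nat) \<Rightarrow> nat) \<Rightarrow> bool" where
  "valid_stop n \<sigma> stop \<longleftrightarrow>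
     (\<forall>v. 1 \<le> stop v \<and> stop v \<le> n) \<and>
     (\<forall>v w k. (\<forall>j<k. v (\<sigma> ! j) = w (\<sigma> ! j)) \<longrightarrow> stop v \<le> k \<longrightarrow> stop w = stop v)"

definition pa_cost :: "nat list \<Rightarrow> ((nat \<Rightarrow> nat) \<Rightarrow> nat) \<Rightarrow> (nat \<Rightarrow> nat) \<Rightarrow> nat" where
  "pa_cost \<sigma> stop v = stop v + Min ((\<lambda>j. v (\<sigma> ! j)) ` {..<stop v})"

definition OPT :: "nat \<Rightarrow> (nat \<Rightarrow> nat) pmf \<Rightarrow> ennreal" where
  "OPT n D = (INF p \<in> {(\<sigma>, stop). valid_order n \<sigma> \<and> valid_stop n \<sigma> stop}.
       \<integral>\<^sup>+ v. ennreal (real (pa_cost (fst p) (snd p) v)) \<partial>measure_pmf D)"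

definition cp_feasible :: "nat \<Rightarrow> (nat \<Rightarrow> nat \<Rightarrow> real) \<Rightarrow> bool" where
  "cp_feasible n x \<longleftrightarrow> (\<forall>i<n. \<forall>t\<in>{1..n}. 0 \<le> x i t) \<and> (\<forall>t\<in>{1..n}. (\<Sum>i<n. x i t) \<le> 1)"

definition cp_term :: "nat \<Rightarrow> (nat \<Rightarrow> nat \<Rightarrow> real) \<Rightarrow> (nat \<Rightarrow> nat) \<Rightarrow> nat \<Rightarrow> real" where
  "cp_term n x v t = max 0 (1 - (\<Sum>i<n. \<Sum>t'\<in>{1..n}.
       if real t' < real t - real (v i) then x i t' else 0))"

definition cp_obj :: "nat \<Rightarrow> (nat \<Rightarrow> nat) pmf \<Rightarrow> (nat \<Rightarrow> nat \<Rightarrow> real) \<Rightarrow> ennreal" where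
  "cp_obj n D x = (\<integral>\<^sup>+ v. (\<Sum>t. ennreal (cp_term n x v (Suc t))) \<partial>measure_pmf D)"

definition cp_optimal :: "nat \<Rightarrow> (nat \<Rightarrow> nat) pmf \<Rightarrow> (nat \<Rightarrow> nat \<Rightarrow> real) \<Rightarrow> bool" where
  "cp_optimal n D x \<longleftrightarrow> cp_feasible n x \<and> (\<forall>y. cp_feasible n y \<longrightarrow> cp_obj n D x \<le> cp_obj n D y)"

definition xbar :: "nat \<Rightarrow> (nat \<Rightarrow> nat \<Rightarrow> real) \<Rightarrow> nat \<Rightarrow> nat \<Rightarrow> real" where
  "xbar n x i t = (1 / real t) * (\<Sum>t'\<in>{1..min t n}. x i t')"

(* distribution of the sample at step \<tau> (\<tau> >= 1): Some i with prob xbar_i(ceil(\<tau>/2)), None otherwise *)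
definition step_pmf :: "nat \<Rightarrow> (nat \<Rightarrow> nat \<Rightarrow> real) \<Rightarrow> nat \<Rightarrow> nat option pmf" where
  "step_pmf n x \<tau> = embed_pmf (\<lambda>r. case r of
       Some i \<Rightarrow> (if i < n then xbar n x i ((\<tau> + 1) div 2) else 0)
     | None \<Rightarrow> 1 - (\<Sum>i<n. xbar n x i ((\<tau> + 1) div 2)))"

(* \<omega> k is the outcome of step \<tau> = k + 1; steps are independent *)
definition rounding_space :: "nat \<Rightarrow> (nat \<Rightarrow> nat \<Rightarrow> real) \<Rightarrow> (nat \<Rightarrow> nat option) measure" where
  "rounding_space n x = (\<Pi>\<^sub>M k\<in>UNIV. measure_pmf (step_pmf n x (Suc k)))"

definition alpha :: "(nat \<Rightarrow> nat option) \<Rightarrow> nat \<Rightarrow> enat" where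
  "alpha \<omega> i = (if \<exists>k. \<omega> k = Some i then enat (Suc (LEAST k. \<omega> k = Some i)) else \<infinity>)"

(* objective for given volumes v and sampling times a; ties in the arg min are
   resolved adversarially (worst case over all minimisers) *)
definition clairvoyant_cost :: "nat \<Rightarrow> (nat \<Rightarrow> nat) \<Rightarrow> (nat \<Rightarrow> enat) \<Rightarrow> ennreal" where
  "clairvoyant_cost n v a =
     (let m = Min ((\<lambda>i. a i + enat (v i)) ` {..<n}) in
      if m = \<infinity> then \<infinity> else
      (SUP i \<in> {i. i < n \<and> a i + enat (v i) = m}.
          ennreal (real (card {j. j < n \<and> a j < a i} + 1 + v i))))"

definition alg_cost :: "nat \<Rightarrow> (nat \<Rightarrow> nat) pmf \<Rightarrow> (nat \<Rightarrow> nat \<Rightarrow> real) \<Rightarrow> ennreal" where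
  "alg_cost n D x = (\<integral>\<^sup>+ v. \<integral>\<^sup>+ \<omega>. clairvoyant_cost n v (alpha \<omega>) \<partial>rounding_space n x \<partial>measure_pmf D)"

end

theory Submission
  imports Defs
begin

definition gg :: "nat \<Rightarrow> nat \<Rightarrow> nat \<Rightarrow> real" where
  "gg a vv \<tau> = (\<Sum>k<\<tau>. if Suc k + vv < \<tau> \<and> a \<le> (k + 2) div 2 then 1 / real ((k + 2) div 2) else 0)"

lemma gg_nonneg: "0 \<le> gg a vv \<tau>"
  unfolding gg_def by (auto intro!: sum_nonneg)

lemma exp_harm: 
  assumes "1 \<le> a" "a \<le> Suc e"
  shows "exp (- (\<Sum>u\<in>{a..e}. 1 / real u)) \<le> real a / real (Suc e)"
  using assms(2)
proof (induction e)
  case 0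
  then have "a = 1" using assms(1) by simp
  then show ?case by simp
next
  case (Suc e)
  show ?case
  proof (cases "a = Suc (Suc e)")
    case True
    then show ?thesis by simp
  next
    case False
    then have ae: "a \<le> Suc e" using Suc.prems by (simp add: le_Suc_eq)
    have IH: "exp (- (\<Sum>u\<in>{a..e}. 1 / real u)) \<le> real a / real (Suc e)" using Suc.IH[OF ae] by simp
    have split: "(\<Sum>u\<in>{a..Suc e}. 1 / real u) = (\<Sum>u\<in>{a..e}. 1 / real u) + 1 / real (Suc e)"
      using ae by (simp add: sum.atLeast_Suc_atMost_Suc_shift sum.cl_ivl_Suc)
    have e1: "exp (- (1 / real (Suc e))) \<le> real (Suc e) / real (Suc (Suc e))"
    proof -
      have eq: "real (Suc (Suc e)) / real (Suc e) = 1 + 1 / real (Suc e)" by (simp add: field_simps)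
      have "real (Suc (Suc e)) / real (Suc e) \<le> exp (1 / real (Suc e))" unfolding eq by (rule exp_ge_add_one_self)
      then have "inverse (exp (1 / real (Suc e))) \<le> inverse (real (Suc (Suc e)) / real (Suc e))"
        by (intro le_imp_inverse_le) auto
      then show ?thesis by (simp add: exp_minus)
    qed
    have "exp (- (\<Sum>u\<in>{a..Suc e}. 1 / real u)) = exp (- (\<Sum>u\<in>{a..e}. 1 / real u)) * exp (- (1 / real (Suc e)))"
      using ae by (simp add: split exp_add[symmetric])
    also have "\<dots> \<le> (real a / real (Suc e)) * (real (Suc e) / real (Suc (Suc e)))"
      by (intro mult_mono IH e1) auto
    also have "\<dots> = real a / real (Suc (Suc e))" by simp
    finally show ?thesis .
  qed
qed

lemma gg_lower:
  assumes "1 \<le> a" "2 * e + vv < \<tau>"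
  shows "2 * (\<Sum>u\<in>{a..e}. 1 / real u) \<le> (\<Sum>k<2*e. if Suc k + vv < \<tau> \<and> a \<le> (k + 2) div 2 then 1 / real ((k + 2) div 2) else 0)"
  using assms(2)
proof (induction e)
  case 0
  then show ?case using assms(1) by simp
next
  case (Suc e)
  have IH: "2 * (\<Sum>u\<in>{a..e}. 1 / real u) \<le> (\<Sum>k<2*e. if Suc k + vv < \<tau> \<and> a \<le> (k + 2) div 2 then 1 / real ((k + 2) div 2) else 0)"
    using Suc by simp
  have d1: "(2 * e + 2) div 2 = Suc e" "(2 * e + 1 + 2) div 2 = Suc e" by auto
  have s: "{..<2 * Suc e} = insert (2*e+1) (insert (2*e) {..<2*e})" by auto
  show ?case
  proof (cases "a \<le> Suc e")
    case True
    have "{a..Suc e} = insert (Suc e) {a..e}" using True by auto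
    then have "(\<Sum>u\<in>{a..Suc e}. 1 / real u) = 1 / real (Suc e) + (\<Sum>u\<in>{a..e}. 1 / real u)" by simp
    then show ?thesis using IH True Suc.prems by (simp add: s d1)
  next
    case False
    then have "{a..Suc e} = {}" by auto
    then show ?thesis by (auto intro!: sum_nonneg)
  qed
qed

lemma gg_exp_bound:
  assumes "1 \<le> a" "2 * a + vv < \<tau>"
  shows "exp (- gg a vv \<tau>) \<le> 4 * real a ^ 2 / (real \<tau> - real vv) ^ 2"
proof -
  define m where "m = \<tau> - vv"
  define e where "e = (m - 1) div 2"
  have m: "2 * a + 1 \<le> m" "real m = real \<tau> - real vv" using assms by (auto simp: m_def)
  have ea: "a \<le> e" using m by (simp add: e_def)
  have le: "2 * e + vv < \<tau>" using m assms unfolding e_def m_def by linarith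
  have "2 * e \<le> \<tau>" using le by simp
  have "2 * (\<Sum>u\<in>{a..e}. 1 / real u) \<le> gg a vv \<tau>"
  proof -
    have "(\<Sum>k<2*e. if Suc k + vv < \<tau> \<and> a \<le> (k + 2) div 2 then 1 / real ((k + 2) div 2) else 0)
       \<le> gg a vv \<tau>" unfolding gg_def using \<open>2 * e \<le> \<tau>\<close>
      by (intro sum_mono2) auto
    then show ?thesis using gg_lower[OF assms(1) le] by linarith
  qed
  then have "exp (- gg a vv \<tau>) \<le> exp (- (\<Sum>u\<in>{a..e}. 1 / real u)) ^ 2"
    by (simp add: exp_of_nat_mult[symmetric] mult.commute)
  also have "\<dots> \<le> (real a / real (Suc e)) ^ 2"
    using exp_harm[OF assms(1)] ea by (intro power_mono) auto
  also have "\<dots> \<le> (2 * real a / real m) ^ 2"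
  proof -
    have "m \<le> 2 * Suc e" unfolding e_def by presburger
    then have "real m \<le> 2 * real (Suc e)" by linarith
    moreover have "0 < real m" using m by simp
    ultimately have "2 * real a / (2 * real (Suc e)) \<le> 2 * real a / real m"
      by (intro divide_left_mono) auto
    moreover have "real a / real (Suc e) = 2 * real a / (2 * real (Suc e))" by (simp add: field_simps)
    ultimately have "real a / real (Suc e) \<le> 2 * real a / real m" by metis
    then show ?thesis by (intro power_mono) auto
  qed
  also have "\<dots> = 4 * real a ^ 2 / (real \<tau> - real vv) ^ 2" using m by (simp add: power_divide power_mult_distrib)
  finally show ?thesis .
qed

lemma exp_gg_le1: "exp (- gg a vv \<tau>) \<le> 1"
  using gg_nonneg[of a vv \<tau>] by simp

lemma gg_partial_small: "(\<Sum>j<N. exp (- gg a vv (Suc j))) \<le> real N"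
proof -
  have "(\<Sum>j<N. exp (- gg a vv (Suc j))) \<le> (\<Sum>j<N. 1)"
    by (intro sum_mono exp_gg_le1)
  then show ?thesis by simp
qed

lemma gg_partial_big:
  assumes a: "1 \<le> a" and N: "2 * a + vv \<le> N"
  shows "(\<Sum>j<N. exp (- gg a vv (Suc j)))
     \<le> real (2 * a + vv) + 4 * real a ^ 2 * (1 / (2 * real a) - 1 / (real N - real vv))"
  using N
proof (induction N rule: dec_induct)
  case base
  have "real (2 * a + vv) - real vv = 2 * real a" by simp
  then show ?case using gg_partial_small[of a vv "2 * a + vv"] by simp
next
  case (step N)
  define m where "m = real N - real vv"
  have m: "2 * real a \<le> m" using step(1) unfolding m_def by linarith
  have mpos: "0 < m" using m a by linarith
  have t: "exp (- gg a vv (Suc N)) \<le> 4 * real a ^ 2 / (m + 1) ^ 2"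
  proof -
    have "exp (- gg a vv (Suc N)) \<le> 4 * real a ^ 2 / (real (Suc N) - real vv) ^ 2"
      using step(1) by (intro gg_exp_bound a) auto
    moreover have "real (Suc N) - real vv = m + 1" unfolding m_def by simp
    ultimately show ?thesis by metis
  qed
  have tel: "4 * real a ^ 2 / (m + 1) ^ 2 \<le> 4 * real a ^ 2 * (1 / m - 1 / (m + 1))"
  proof -
    have e: "1 / m - 1 / (m + 1) = 1 / (m * (m + 1))" using mpos by (simp add: field_simps)
    have "1 / (m + 1) ^ 2 \<le> 1 / (m * (m + 1))"
      using mpos by (intro divide_left_mono) (auto simp: power2_eq_square)
    then have "1 / (m + 1) ^ 2 \<le> 1 / m - 1 / (m + 1)" using e by simp
    then show ?thesis by (simp add: divide_inverse mult_left_mono)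
  qed
  have "(\<Sum>j<Suc N. exp (- gg a vv (Suc j))) = (\<Sum>j<N. exp (- gg a vv (Suc j))) + exp (- gg a vv (Suc N))"
    by simp
  also have "\<dots> \<le> real (2 * a + vv) + 4 * real a ^ 2 * (1 / (2 * real a) - 1 / m) + 4 * real a ^ 2 * (1 / m - 1 / (m + 1))"
    using step(3) t tel unfolding m_def by linarith
  also have "\<dots> = real (2 * a + vv) + 4 * real a ^ 2 * (1 / (2 * real a) - 1 / (real (Suc N) - real vv))"
    unfolding m_def by (simp add: algebra_simps)
  finally show ?case .
qed

lemma gg_partial:
  assumes a: "1 \<le> a"
  shows "(\<Sum>j<N. exp (- gg a vv (Suc j))) \<le> 4 * real a + real vv"
proof (cases "2 * a + vv \<le> N")
  case True
  have m: "2 * real a \<le> real N - real vv" using True by linarith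
  then have "0 < real N - real vv" using a by linarith
  then have "4 * real a ^ 2 * (1 / (2 * real a) - 1 / (real N - real vv)) \<le> 4 * real a ^ 2 * (1 / (2 * real a))"
    by (intro mult_left_mono) auto
  also have "\<dots> = 2 * real a" using a by (simp add: power2_eq_square)
  finally show ?thesis using gg_partial_big[OF a True] by simp
next
  case False
  then show ?thesis using gg_partial_small[of a vv N] by simp
qed

lemma xbar_nonneg: "cp_feasible n x \<Longrightarrow> i < n \<Longrightarrow> 0 \<le> xbar n x i u"
  unfolding cp_feasible_def xbar_def by (auto intro!: sum_nonneg divide_nonneg_nonneg)

lemma xbar_sum_le1:
  assumes "cp_feasible n x"
  shows "(\<Sum>i<n. xbar n x i u) \<le> 1"
proof (cases "u = 0")
  case True then show ?thesis by (simp add: xbar_def)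
next
  case False
  have "(\<Sum>i<n. xbar n x i u) = (1 / real u) * (\<Sum>t'\<in>{1..min u n}. \<Sum>i<n. x i t')"
    unfolding xbar_def by (simp add: sum_distrib_left sum.swap[of _ "{..<n}"])
  also have "\<dots> \<le> (1 / real u) * (\<Sum>t'\<in>{1..min u n}. 1)"
    using assms unfolding cp_feasible_def by (intro mult_left_mono sum_mono) auto
  also have "\<dots> = real (min u n) / real u" by simp
  also have "\<dots> \<le> 1" using False by simp
  finally show ?thesis .
qed

definition stepf :: "nat \<Rightarrow> (nat \<Rightarrow> nat \<Rightarrow> real) \<Rightarrow> nat \<Rightarrow> nat option \<Rightarrow> real" where
  "stepf n x \<tau> = (\<lambda>r. case r of
       Some i \<Rightarrow> (if i < n then xbar n x i ((\<tau> + 1) div 2) else 0)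
     | None \<Rightarrow> 1 - (\<Sum>i<n. xbar n x i ((\<tau> + 1) div 2)))"

lemma stepf_nonneg: "cp_feasible n x \<Longrightarrow> 0 \<le> stepf n x \<tau> r"
proof (cases r)
  case None
  assume "cp_feasible n x"
  then show ?thesis using None xbar_sum_le1[of n x] unfolding stepf_def by simp
next
  case (Some i)
  assume "cp_feasible n x"
  then show ?thesis using Some xbar_nonneg[of n x i] unfolding stepf_def by simp
qed

lemma stepf_prob: 
  assumes "cp_feasible n x"
  shows "(\<integral>\<^sup>+r. ennreal (stepf n x \<tau> r) \<partial>count_space UNIV) = 1"
proof -
  let ?A = "insert None (Some ` {..<n})"
  have "(\<integral>\<^sup>+r. ennreal (stepf n x \<tau> r) \<partial>count_space UNIV) = (\<Sum>r\<in>?A. ennreal (stepf n x \<tau> r))"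
  proof (rule nn_integral_count_space')
    fix r :: "nat option" assume "r \<notin> ?A"
    then obtain i where "r = Some i" "\<not> i < n" by (cases r) auto
    then show "ennreal (stepf n x \<tau> r) = 0" by (simp add: stepf_def)
  qed auto
  also have "\<dots> = ennreal (\<Sum>r\<in>?A. stepf n x \<tau> r)"
    using stepf_nonneg[OF assms] by simp
  also have "(\<Sum>r\<in>?A. stepf n x \<tau> r) = stepf n x \<tau> None + (\<Sum>i<n. stepf n x \<tau> (Some i))"
    by (simp add: sum.reindex)
  also have "\<dots> = 1" by (simp add: stepf_def)
  finally show ?thesis by simp
qed

lemma step_pmf_eq: "step_pmf n x \<tau> = embed_pmf (stepf n x \<tau>)"
  unfolding step_pmf_def stepf_def ..

lemma pmf_step_Some:
  assumes "cp_feasible n x" "i < n"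
  shows "pmf (step_pmf n x \<tau>) (Some i) = xbar n x i ((\<tau> + 1) div 2)"
  unfolding step_pmf_eq
  by (subst pmf_embed_pmf[OF stepf_nonneg[OF assms(1)] stepf_prob[OF assms(1)]]) (simp add: stepf_def assms)

lemma alpha_Some: "(\<exists>k. \<omega> k = Some i) \<Longrightarrow> alpha \<omega> i = enat (Suc (LEAST k. \<omega> k = Some i))"
  unfolding alpha_def by (rule if_P)

lemma alpha_None: "\<not> (\<exists>k. \<omega> k = Some i) \<Longrightarrow> alpha \<omega> i = \<infinity>"
  unfolding alpha_def by (rule if_not_P)

lemma alpha_ge1: "alpha \<omega> i \<noteq> enat 0"
proof (cases "\<exists>k. \<omega> k = Some i")
  case True
  show ?thesis unfolding alpha_Some[OF True] enat.inject using Suc_neq_Zero by blast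
next
  case False
  show ?thesis unfolding alpha_None[OF False] by simp
qed

lemma alpha_le_iff:
  "(alpha \<omega> i + enat c \<le> enat j) \<longleftrightarrow> (\<exists>k. \<omega> k = Some i \<and> Suc k + c \<le> j)"
proof (cases "\<exists>k. \<omega> k = Some i")
  case True
  define L where "L = (LEAST k. \<omega> k = Some i)"
  have L: "\<omega> L = Some i" unfolding L_def using True by (rule LeastI_ex)
  have Lmin: "\<And>k. \<omega> k = Some i \<Longrightarrow> L \<le> k" unfolding L_def by (rule Least_le)
  have aL: "alpha \<omega> i = enat (Suc L)" unfolding alpha_def L_def using True by (rule if_P)
  show ?thesis
  proof
    assume "alpha \<omega> i + enat c \<le> enat j"
    then have "Suc L + c \<le> j" using aL by simp
    then show "\<exists>k. \<omega> k = Some i \<and> Suc k + c \<le> j" using L by blast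
  next
    assume "\<exists>k. \<omega> k = Some i \<and> Suc k + c \<le> j"
    then obtain k where k: "\<omega> k = Some i" "Suc k + c \<le> j" by blast
    then have "Suc L + c \<le> j" using Lmin[OF k(1)] by simp
    then show "alpha \<omega> i + enat c \<le> enat j" using aL by simp
  qed
next
  case False
  then have "alpha \<omega> i = \<infinity>" unfolding alpha_def by (rule if_not_P)
  then show ?thesis using False by simp
qed

definition Ej :: "nat \<Rightarrow> (nat \<Rightarrow> nat) \<Rightarrow> nat \<Rightarrow> (nat \<Rightarrow> nat option) set" where
  "Ej n v j = {\<omega>. \<forall>i<n. enat j < alpha \<omega> i + enat (v i)}"

lemma suminf_pos_top:
  fixes f :: "nat \<Rightarrow> real"
  assumes "0 < c" "\<And>t. c \<le> f t"
  shows "(\<Sum>t. ennreal (f t)) = \<top>"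
proof (rule ccontr)
  assume "(\<Sum>t. ennreal (f t)) \<noteq> \<top>"
  have nn: "\<And>t. 0 \<le> f t" using assms by (meson less_le_trans less_imp_le)
  with \<open>(\<Sum>t. ennreal (f t)) \<noteq> \<top>\<close> have "summable f" by (intro summable_suminf_not_top)
  then have "f \<longlonglongrightarrow> 0" by (rule summable_LIMSEQ_zero)
  then have "eventually (\<lambda>t. f t < c) sequentially" using assms(1) by (rule order_tendstoD(2))
  then obtain N where "\<And>t. t \<ge> N \<Longrightarrow> f t < c" by (auto simp: eventually_sequentially)
  then have "f N < c" by simp
  then show False using assms(2)[of N] by simp
qed

lemma suminf_one_top: "(\<Sum>j. (1::ennreal)) = \<top>"
  using suminf_pos_top[of 1 "\<lambda>_. 1"] by simp

lemma card_before:
  assumes "alpha \<omega> i = enat A"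
  shows "card {j. j < n \<and> alpha \<omega> j < alpha \<omega> i} \<le> A - 1"
proof -
  define J where "J = {j. j < n \<and> alpha \<omega> j < enat A}"
  define L where "L = (\<lambda>j. LEAST k. \<omega> k = Some j)"
  have ex: "\<exists>k. \<omega> k = Some j" if "j \<in> J" for j
  proof (rule ccontr)
    assume "\<not> ?thesis"
    then have "alpha \<omega> j = \<infinity>" by (rule alpha_None)
    then show False using that by (simp add: J_def)
  qed
  have Lj: "\<omega> (L j) = Some j" if "j \<in> J" for j
    unfolding L_def using ex[OF that] by (rule LeastI_ex)
  have aj: "alpha \<omega> j = enat (Suc (L j))" if "j \<in> J" for j
    unfolding L_def using ex[OF that] by (rule alpha_Some)
  have inj: "inj_on L J"
  proof (rule inj_onI)
    fix a b assume ab: "a \<in> J" "b \<in> J" "L a = L b"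
    have "Some a = \<omega> (L a)" using Lj[OF ab(1)] by simp
    also have "\<dots> = \<omega> (L b)" using ab(3) by simp
    also have "\<dots> = Some b" using Lj[OF ab(2)] by simp
    finally show "a = b" by simp
  qed
  have sub: "L ` J \<subseteq> {..<A - 1}"
  proof
    fix k assume "k \<in> L ` J"
    then obtain j where j: "j \<in> J" "k = L j" by auto
    then have "enat (Suc (L j)) < enat A" using aj[OF j(1)] by (simp add: J_def)
    then show "k \<in> {..<A - 1}" using j by simp
  qed
  have "card J \<le> card {..<A - 1}" by (rule card_inj_on_le[OF inj sub]) simp
  then show ?thesis using assms by (simp add: J_def)
qed

lemma cc_le:
  assumes n: "1 \<le> n"
  shows "clairvoyant_cost n v (alpha \<omega>) \<le> (\<Sum>j. indicator (Ej n v j) \<omega>)"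
proof -
  define m where "m = Min ((\<lambda>i. alpha \<omega> i + enat (v i)) ` {..<n})"
  have "0 \<in> {..<n}" using n by simp
  then have ne: "(\<lambda>i. alpha \<omega> i + enat (v i)) ` {..<n} \<noteq> {}" by blast
  have memE: "\<omega> \<in> Ej n v j \<longleftrightarrow> enat j < m" for j
    unfolding Ej_def m_def using ne by (subst Min_gr_iff) auto
  show ?thesis
  proof (cases "m = \<infinity>")
    case True
    then have "\<And>j. indicator (Ej n v j) \<omega> = (1::ennreal)" using memE by simp
    then have "(\<Sum>j. indicator (Ej n v j) \<omega>) = (\<top>::ennreal)" using suminf_one_top by simp
    then show ?thesis by simp
  next
    case False
    then obtain M0 where M0: "m = enat M0" by (cases m) auto
    have "(\<Sum>j. indicator (Ej n v j) \<omega>) = (\<Sum>j<M0. indicator (Ej n v j) \<omega> :: ennreal)"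
      by (rule suminf_finite) (auto simp: memE M0)
    also have "\<dots> = (\<Sum>j<M0. 1 :: ennreal)"
      by (intro sum.cong) (auto simp: memE M0)
    also have "\<dots> = ennreal (real M0)" by (simp add: ennreal_of_nat_eq_real_of_nat)
    finally have eqs: "(\<Sum>j. indicator (Ej n v j) \<omega>) = ennreal (real M0)" .
    have "clairvoyant_cost n v (alpha \<omega>) = (SUP i \<in> {i. i < n \<and> alpha \<omega> i + enat (v i) = m}.
          ennreal (real (card {j. j < n \<and> alpha \<omega> j < alpha \<omega> i} + 1 + v i)))"
      unfolding clairvoyant_cost_def Let_def m_def[symmetric] using M0 by simp
    also have "\<dots> \<le> ennreal (real M0)"
    proof (rule SUP_least)
      fix i assume "i \<in> {i. i < n \<and> alpha \<omega> i + enat (v i) = m}"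
      then have i: "alpha \<omega> i + enat (v i) = enat M0" using M0 by simp
      then obtain A where A: "alpha \<omega> i = enat A" by (cases "alpha \<omega> i") auto
      have AM: "A + v i = M0" using i A by simp
      have A1: "1 \<le> A" using A alpha_ge1[of \<omega> i] by (cases A) auto
      have "card {j. j < n \<and> alpha \<omega> j < alpha \<omega> i} + 1 + v i \<le> M0"
        using card_before[OF A, of n] AM A1 by linarith
      then show "ennreal (real (card {j. j < n \<and> alpha \<omega> j < alpha \<omega> i} + 1 + v i)) \<le> ennreal (real M0)"
        by (intro ennreal_leI) simp
    qed
    finally show ?thesis using eqs by simp
  qed
qed

definition Aset :: "nat \<Rightarrow> (nat \<Rightarrow> nat) \<Rightarrow> nat \<Rightarrow> nat \<Rightarrow> nat option set" where
  "Aset n v j k = UNIV - Some ` {i. i < n \<and> Suc k + v i \<le> j}"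

definition Pq :: "nat \<Rightarrow> (nat \<Rightarrow> nat \<Rightarrow> real) \<Rightarrow> (nat \<Rightarrow> nat) \<Rightarrow> nat \<Rightarrow> nat \<Rightarrow> real" where
  "Pq n x v j k = (\<Sum>i<n. if Suc k + v i \<le> j then xbar n x i ((Suc k + 1) div 2) else 0)"

lemma rounding_space_eq: "rounding_space n x = (\<Pi>\<^sub>M k\<in>UNIV. measure_pmf (step_pmf n x (Suc k)))"
  unfolding rounding_space_def ..

lemma Ej_eq:
  "Ej n v j = prod_emb UNIV (\<lambda>k. measure_pmf (step_pmf n x (Suc k))) {..<Suc j} (\<Pi>\<^sub>E k\<in>{..<Suc j}. Aset n v j k)"
proof -
  have a: "enat j < alpha \<omega> i + enat (v i) \<longleftrightarrow> \<not> (\<exists>k. \<omega> k = Some i \<and> Suc k + v i \<le> j)" for \<omega> i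
    using alpha_le_iff[of \<omega> i "v i" j] by (simp add: not_le[symmetric])
  show ?thesis
    unfolding Ej_def prod_emb_def Aset_def
  proof (auto simp: space_PiM a)
    fix \<omega> :: "nat \<Rightarrow> nat option" and i k
    assume "\<omega> \<in> (\<Pi> k\<in>{..<Suc j}. UNIV - Some ` {i. i < n \<and> Suc (k + v i) \<le> j})"
      "i < n" "\<omega> k = Some i" "Suc (k + v i) \<le> j"
    moreover have "k \<in> {..<Suc j}" using \<open>Suc (k + v i) \<le> j\<close> by simp
    ultimately show False by (auto simp: Pi_iff)
  qed
qed

lemma Ej_sets: "Ej n v j \<in> sets (rounding_space n x)"
  unfolding rounding_space_eq Ej_eq[of n v j x] by (rule sets_PiM_I) auto

lemma measure_Aset:
  assumes "cp_feasible n x"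
  shows "measure (measure_pmf (step_pmf n x (Suc k))) (Aset n v j k) = 1 - Pq n x v j k"
proof -
  let ?B = "Some ` {i. i < n \<and> Suc k + v i \<le> j}"
  have fin: "finite ?B" by simp
  have "measure (measure_pmf (step_pmf n x (Suc k))) ?B = (\<Sum>b\<in>?B. pmf (step_pmf n x (Suc k)) b)"
    by (rule measure_measure_pmf_finite[OF fin])
  also have "\<dots> = (\<Sum>i\<in>{i. i < n \<and> Suc k + v i \<le> j}. pmf (step_pmf n x (Suc k)) (Some i))"
    by (simp add: sum.reindex)
  also have "\<dots> = (\<Sum>i\<in>{i. i < n \<and> Suc k + v i \<le> j}. xbar n x i ((Suc k + 1) div 2))"
    using pmf_step_Some[OF assms] by (intro sum.cong) auto
  also have "\<dots> = Pq n x v j k"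
    unfolding Pq_def by (simp add: sum.If_cases Int_def conj_commute)
  finally have mB: "measure (measure_pmf (step_pmf n x (Suc k))) ?B = Pq n x v j k" .
  have "measure (measure_pmf (step_pmf n x (Suc k))) (Aset n v j k)
      = measure (measure_pmf (step_pmf n x (Suc k))) (space (measure_pmf (step_pmf n x (Suc k))) - ?B)"
    unfolding Aset_def by simp
  also have "\<dots> = 1 - measure (measure_pmf (step_pmf n x (Suc k))) ?B"
    by (rule measure_pmf.prob_compl) simp
  finally show ?thesis using mB by simp
qed

lemma emeasure_Ej:
  assumes "cp_feasible n x"
  shows "emeasure (rounding_space n x) (Ej n v j) = ennreal (\<Prod>k<Suc j. 1 - Pq n x v j k)"
proof -
  have "emeasure (rounding_space n x) (Ej n v j)
      = (\<Prod>k<Suc j. emeasure (measure_pmf (step_pmf n x (Suc k))) (Aset n v j k))"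
    unfolding rounding_space_eq Ej_eq[of n v j x]
    by (rule emeasure_PiM_emb) (auto simp: prob_space_measure_pmf)
  also have "\<dots> = (\<Prod>k<Suc j. ennreal (1 - Pq n x v j k))"
    by (intro prod.cong refl) (simp add: measure_pmf.emeasure_eq_measure measure_Aset[OF assms])
  also have "\<dots> = ennreal (\<Prod>k<Suc j. 1 - Pq n x v j k)"
  proof (rule prod_ennreal)
    fix k
    show "0 \<le> 1 - Pq n x v j k" using measure_Aset[OF assms, of k v j] by (metis measure_nonneg)
  qed
  finally show ?thesis .
qed

lemma xbar_alt: "xbar n x i u = (\<Sum>t\<in>{1..n}. if t \<le> u then x i t / real u else 0)"
proof -
  have "(\<Sum>t\<in>{1..n}. if t \<le> u then x i t / real u else 0) = (\<Sum>t\<in>{t\<in>{1..n}. t \<le> u}. x i t / real u)"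
    by (subst sum.inter_filter) auto
  also have "{t\<in>{1..n}. t \<le> u} = {1..min u n}" by auto
  finally show ?thesis unfolding xbar_def by (simp add: sum_divide_distrib)
qed

lemma sum_Pq:
  "(\<Sum>k<Suc j. Pq n x v j k) = (\<Sum>i<n. \<Sum>t\<in>{1..n}. x i t * gg t (v i) (Suc j))"
proof -
  have u: "(Suc k + 1) div 2 = (k + 2) div 2" for k :: nat by simp
  have u2: "(k + 2) div 2 = Suc (k div 2)" for k :: nat by simp
  have "(\<Sum>k<Suc j. Pq n x v j k) = (\<Sum>i<n. \<Sum>k<Suc j. if Suc k + v i \<le> j then xbar n x i ((Suc k + 1) div 2) else 0)"
    unfolding Pq_def by (rule sum.swap)
  also have "\<dots> = (\<Sum>i<n. \<Sum>k<Suc j. \<Sum>t\<in>{1..n}.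
       x i t * (if Suc k + v i < Suc j \<and> t \<le> (k + 2) div 2 then 1 / real ((k + 2) div 2) else 0))"
    by (intro sum.cong refl) (auto simp: xbar_alt u u2 intro!: sum.cong)
  also have "\<dots> = (\<Sum>i<n. \<Sum>t\<in>{1..n}. \<Sum>k<Suc j.
       x i t * (if Suc k + v i < Suc j \<and> t \<le> (k + 2) div 2 then 1 / real ((k + 2) div 2) else 0))"
    by (rule sum.cong[OF refl]) (rule sum.swap)
  also have "\<dots> = (\<Sum>i<n. \<Sum>t\<in>{1..n}. x i t * gg t (v i) (Suc j))"
    unfolding gg_def by (simp add: sum_distrib_left)
  finally show ?thesis .
qed

lemma prod_le_exp:
  fixes a :: "nat \<Rightarrow> real"
  assumes "\<And>k. k \<in> K \<Longrightarrow> 0 \<le> 1 - a k"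
  shows "(\<Prod>k\<in>K. 1 - a k) \<le> exp (- (\<Sum>k\<in>K. a k))"
proof -
  have "(\<Prod>k\<in>K. 1 - a k) \<le> (\<Prod>k\<in>K. exp (- a k))"
  proof (rule prod_mono)
    fix k assume "k \<in> K"
    then show "0 \<le> 1 - a k \<and> 1 - a k \<le> exp (- a k)"
      using assms exp_ge_add_one_self[of "- a k"] by simp
  qed
  also have "\<dots> = exp (- (\<Sum>k\<in>K. a k))"
  proof (cases "finite K")
    case True
    have "exp (- (\<Sum>k\<in>K. a k)) = exp (\<Sum>k\<in>K. - a k)" by (simp add: sum_negf)
    also have "\<dots> = (\<Prod>k\<in>K. exp (- a k))" by (rule exp_sum[OF True])
    finally show ?thesis by simp
  qed simp
  finally show ?thesis .
qed

definition PP :: "nat \<Rightarrow> (nat \<times> nat) set" where "PP n = {..<n} \<times> {1..n}"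
definition cpt :: "(nat \<Rightarrow> nat) \<Rightarrow> nat \<times> nat \<Rightarrow> nat" where "cpt v p = snd p + v (fst p)"
definition XX :: "nat \<Rightarrow> (nat \<Rightarrow> nat \<Rightarrow> real) \<Rightarrow> (nat \<Rightarrow> nat) \<Rightarrow> nat \<Rightarrow> real" where
  "XX n x v t = (\<Sum>p\<in>PP n. if cpt v p < t then x (fst p) (snd p) else 0)"

lemma finite_PP[simp]: "finite (PP n)" by (simp add: PP_def)

lemma xp_nonneg: "cp_feasible n x \<Longrightarrow> p \<in> PP n \<Longrightarrow> 0 \<le> x (fst p) (snd p)"
  unfolding cp_feasible_def PP_def by auto

lemma cp_term_XX: "cp_term n x v t = max 0 (1 - XX n x v t)"
proof -
  have "(\<Sum>i<n. \<Sum>t'\<in>{1..n}. if real t' < real t - real (v i) then x i t' else 0)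
      = (\<Sum>(i, t')\<in>{..<n} \<times> {1..n}. if real t' < real t - real (v i) then x i t' else 0)"
    by (rule sum.cartesian_product)
  also have "\<dots> = XX n x v t"
    unfolding XX_def PP_def cpt_def by (intro sum.cong refl) auto
  finally show ?thesis unfolding cp_term_def by simp
qed

lemma XX_le_S: "cp_feasible n x \<Longrightarrow> XX n x v t \<le> (\<Sum>p\<in>PP n. x (fst p) (snd p))"
  unfolding XX_def by (intro sum_mono) (auto simp: xp_nonneg)

lemma XX_0: "XX n x v 0 = 0" unfolding XX_def by simp

lemma XX_big:
  assumes "\<And>p. p \<in> PP n \<Longrightarrow> cpt v p < T"
  shows "XX n x v T = (\<Sum>p\<in>PP n. x (fst p) (snd p))"
  unfolding XX_def using assms by (intro sum.cong refl) auto

lemma cpt_bound: "p \<in> PP n \<Longrightarrow> cpt v p < Suc (n + (\<Sum>i<n. v i))"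
proof -
  assume p: "p \<in> PP n"
  then have "fst p < n" "snd p \<le> n" by (auto simp: PP_def)
  then have "v (fst p) \<le> (\<Sum>i<n. v i)" by (intro member_le_sum) auto
  then show ?thesis using \<open>snd p \<le> n\<close> by (simp add: cpt_def)
qed

lemma XX_Suc: "XX n x v (Suc t) = XX n x v t + (\<Sum>p\<in>PP n. if cpt v p = t then x (fst p) (snd p) else 0)"
  unfolding XX_def by (subst sum.distrib[symmetric]) (intro sum.cong refl, auto)

lemma exists_y:
  assumes feas: "cp_feasible n x" and S1: "1 \<le> (\<Sum>p\<in>PP n. x (fst p) (snd p))"
  obtains y where "\<And>p. p \<in> PP n \<Longrightarrow> 0 \<le> y p"
    "\<And>p. p \<in> PP n \<Longrightarrow> y p \<le> x (fst p) (snd p)"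
    "(\<Sum>p\<in>PP n. y p) = 1"
    "\<And>t. (\<Sum>p\<in>PP n. if t \<le> cpt v p then y p else 0) \<le> cp_term n x v t"
proof -
  let ?X = "XX n x v"
  let ?x = "\<lambda>p. x (fst p) (snd p)"
  define T0 where "T0 = n + (\<Sum>i<n. v i)"
  have exT: "1 \<le> ?X (Suc T0)"
    using S1 XX_big[of n v "Suc T0" x] cpt_bound[of _ n v] unfolding T0_def by simp
  define ts where "ts = (LEAST t. 1 \<le> ?X (Suc t))"
  have ts1: "1 \<le> ?X (Suc ts)" unfolding ts_def using exT by (rule LeastI)
  have ts0: "?X ts < 1"
  proof (cases ts)
    case 0 then show ?thesis by (simp add: XX_0)
  next
    case (Suc s)
    have "\<not> 1 \<le> ?X (Suc s)"
    proof
      assume "1 \<le> ?X (Suc s)"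
      then have "ts \<le> s" unfolding ts_def by (rule Least_le)
      then show False using Suc by simp
    qed
    then show ?thesis using Suc by simp
  qed
  define ms where "ms = (\<Sum>p\<in>PP n. if cpt v p = ts then ?x p else 0)"
  have Xs: "?X (Suc ts) = ?X ts + ms" unfolding ms_def by (rule XX_Suc)
  have ms_pos: "0 < ms" using ts0 ts1 Xs by linarith
  define lam where "lam = (1 - ?X ts) / ms"
  have lam0: "0 \<le> lam" using ts0 ms_pos unfolding lam_def by simp
  have lam1: "lam \<le> 1" using ts1 Xs ms_pos unfolding lam_def by simp
  define y where "y = (\<lambda>p. if cpt v p < ts then ?x p else if cpt v p = ts then lam * ?x p else 0)"
  have ynn: "0 \<le> y p" if "p \<in> PP n" for p
    using xp_nonneg[OF feas that] lam0 unfolding y_def by simp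
  have yle: "y p \<le> ?x p" if "p \<in> PP n" for p
  proof -
    have "lam * ?x p \<le> ?x p" using xp_nonneg[OF feas that] lam1 lam0 by (simp add: mult_left_le_one_le)
    then show ?thesis using xp_nonneg[OF feas that] unfolding y_def by simp
  qed
  have ysum: "(\<Sum>p\<in>PP n. y p) = 1"
  proof -
    have "(\<Sum>p\<in>PP n. y p) = (\<Sum>p\<in>PP n. (if cpt v p < ts then ?x p else 0) + lam * (if cpt v p = ts then ?x p else 0))"
      unfolding y_def by (intro sum.cong refl) auto
    also have "\<dots> = ?X ts + lam * ms"
      unfolding XX_def ms_def by (simp add: sum.distrib sum_distrib_left)
    also have "\<dots> = 1" unfolding lam_def using ms_pos by simp
    finally show ?thesis .
  qed
  have ylow: "(\<Sum>p\<in>PP n. if t \<le> cpt v p then y p else 0) \<le> cp_term n x v t" for t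
  proof (cases "t \<le> ts")
    case True
    have "(\<Sum>p\<in>PP n. if cpt v p < t then y p else 0) = ?X t"
      unfolding XX_def y_def using True by (intro sum.cong refl) auto
    moreover have "(\<Sum>p\<in>PP n. if t \<le> cpt v p then y p else 0) + (\<Sum>p\<in>PP n. if cpt v p < t then y p else 0) = 1"
    proof -
      have "(\<Sum>p\<in>PP n. (if t \<le> cpt v p then y p else 0) + (if cpt v p < t then y p else 0)) = (\<Sum>p\<in>PP n. y p)"
        by (intro sum.cong refl) auto
      then show ?thesis using ysum by (simp add: sum.distrib)
    qed
    ultimately show ?thesis unfolding cp_term_XX by linarith
  next
    case False
    have "(\<Sum>p\<in>PP n. if t \<le> cpt v p then y p else 0) = 0"
      unfolding y_def using False by (intro sum.neutral) auto
    then show ?thesis unfolding cp_term_XX by simp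
  qed
  show ?thesis using that ynn yle ysum ylow by blast
qed

lemma PP_ne: "1 \<le> n \<Longrightarrow> PP n \<noteq> {}"
proof -
  assume "1 \<le> n"
  then have "(0, 1) \<in> PP n" by (simp add: PP_def)
  then show ?thesis by blast
qed

lemma per_v:
  assumes n1: "1 \<le> n" and feas: "cp_feasible n x"
  shows "(\<integral>\<^sup>+\<omega>. clairvoyant_cost n v (alpha \<omega>) \<partial>rounding_space n x)
      \<le> 4 * (\<Sum>t. ennreal (cp_term n x v (Suc t)))"
proof (cases "1 \<le> (\<Sum>p\<in>PP n. x (fst p) (snd p))")
  case False
  let ?S = "(\<Sum>p\<in>PP n. x (fst p) (snd p))"
  have "1 - ?S \<le> cp_term n x v (Suc t)" for t
    using XX_le_S[OF feas, of v "Suc t"] unfolding cp_term_XX by simp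
  then have "(\<Sum>t. ennreal (cp_term n x v (Suc t))) = \<top>"
    using False by (intro suminf_pos_top[of "1 - ?S"]) auto
  then show ?thesis by simp
next
  case True
  obtain y where ynn: "\<And>p. p \<in> PP n \<Longrightarrow> 0 \<le> y p"
    and yle: "\<And>p. p \<in> PP n \<Longrightarrow> y p \<le> x (fst p) (snd p)"
    and ysum: "(\<Sum>p\<in>PP n. y p) = 1"
    and ylow: "\<And>t. (\<Sum>p\<in>PP n. if t \<le> cpt v p then y p else 0) \<le> cp_term n x v t"
    using exists_y[OF feas True, of v] by blast
  define G where "G p \<tau> = gg (snd p) (v (fst p)) \<tau>" for p \<tau>
  define R where "R j = (\<Sum>p\<in>PP n. y p * exp (- G p (Suc j)))" for j
  have Rnn: "0 \<le> R j" for j unfolding R_def using ynn by (intro sum_nonneg) auto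
  have step_j: "emeasure (rounding_space n x) (Ej n v j) \<le> ennreal (R j)" for j
  proof -
    have sumeq: "(\<Sum>k<Suc j. Pq n x v j k) = (\<Sum>p\<in>PP n. x (fst p) (snd p) * G p (Suc j))"
    proof -
      have "(\<Sum>k<Suc j. Pq n x v j k) = (\<Sum>i<n. \<Sum>t\<in>{1..n}. x i t * gg t (v i) (Suc j))"
        by (rule sum_Pq)
      also have "\<dots> = (\<Sum>(i, t)\<in>{..<n} \<times> {1..n}. x i t * gg t (v i) (Suc j))"
        by (rule sum.cartesian_product)
      also have "\<dots> = (\<Sum>p\<in>PP n. x (fst p) (snd p) * G p (Suc j))"
        unfolding PP_def G_def by (intro sum.cong refl) auto
      finally show ?thesis .
    qed
    have yG: "(\<Sum>p\<in>PP n. y p * G p (Suc j)) \<le> (\<Sum>p\<in>PP n. x (fst p) (snd p) * G p (Suc j))"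
      using yle unfolding G_def by (intro sum_mono mult_right_mono gg_nonneg) auto
    have nn1: "0 \<le> 1 - Pq n x v j k" for k
      using measure_Aset[OF feas, of k v j] by (metis measure_nonneg)
    have "(\<Prod>k<Suc j. 1 - Pq n x v j k) \<le> exp (- (\<Sum>k<Suc j. Pq n x v j k))"
      by (rule prod_le_exp) (rule nn1)
    also have "\<dots> \<le> exp (- (\<Sum>p\<in>PP n. y p * G p (Suc j)))"
      using yG sumeq by simp
    also have "\<dots> = exp (\<Sum>p\<in>PP n. y p *\<^sub>R (- G p (Suc j)))"
      by (simp add: sum_negf)
    also have "\<dots> \<le> (\<Sum>p\<in>PP n. y p * exp (- G p (Suc j)))"
      by (rule convex_on_sum[OF finite_PP PP_ne[OF n1] exp_convex ysum ynn]) auto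
    finally have "(\<Prod>k<Suc j. 1 - Pq n x v j k) \<le> R j" unfolding R_def .
    then show ?thesis unfolding emeasure_Ej[OF feas] by (rule ennreal_leI)
  qed
  have int: "(\<integral>\<^sup>+\<omega>. clairvoyant_cost n v (alpha \<omega>) \<partial>rounding_space n x)
      \<le> (\<Sum>j. emeasure (rounding_space n x) (Ej n v j))"
  proof -
    have "(\<integral>\<^sup>+\<omega>. clairvoyant_cost n v (alpha \<omega>) \<partial>rounding_space n x)
        \<le> (\<integral>\<^sup>+\<omega>. (\<Sum>j. indicator (Ej n v j) \<omega>) \<partial>rounding_space n x)"
      by (rule nn_integral_mono) (rule cc_le[OF n1])
    also have "\<dots> = (\<Sum>j. \<integral>\<^sup>+\<omega>. indicator (Ej n v j) \<omega> \<partial>rounding_space n x)"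
      by (rule nn_integral_suminf) (rule borel_measurable_indicator[OF Ej_sets])
    also have "\<dots> = (\<Sum>j. emeasure (rounding_space n x) (Ej n v j))"
      by (simp add: Ej_sets)
    finally show ?thesis .
  qed
  have sumR: "(\<Sum>j. emeasure (rounding_space n x) (Ej n v j)) \<le> (\<Sum>j. ennreal (R j))"
    by (intro suminf_le step_j summableI)
  define Q where "Q = (\<Sum>p\<in>PP n. y p * real (cpt v p))"
  have Qnn: "0 \<le> Q" unfolding Q_def using ynn by (intro sum_nonneg) auto
  have partial: "(\<Sum>j<N. R j) \<le> 4 * Q" for N
  proof -
    have "(\<Sum>j<N. R j) = (\<Sum>p\<in>PP n. y p * (\<Sum>j<N. exp (- G p (Suc j))))"
      unfolding R_def by (simp add: sum_distrib_left sum.swap[of _ "{..<N}"])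
    also have "\<dots> \<le> (\<Sum>p\<in>PP n. y p * (4 * real (cpt v p)))"
    proof (rule sum_mono)
      fix p assume p: "p \<in> PP n"
      then have "1 \<le> snd p" by (auto simp: PP_def)
      then have "(\<Sum>j<N. exp (- G p (Suc j))) \<le> 4 * real (snd p) + real (v (fst p))"
        unfolding G_def by (rule gg_partial)
      also have "\<dots> \<le> 4 * real (cpt v p)" by (simp add: cpt_def)
      finally show "y p * (\<Sum>j<N. exp (- G p (Suc j))) \<le> y p * (4 * real (cpt v p))"
        using ynn[OF p] by (rule mult_left_mono)
    qed
    also have "\<dots> = 4 * Q" unfolding Q_def by (simp add: sum_distrib_left algebra_simps)
    finally show ?thesis .
  qed
  have sumR2: "(\<Sum>j. ennreal (R j)) \<le> ennreal (4 * Q)"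
  proof -
    have "(\<Sum>j. ennreal (R j)) + 0 \<le> ennreal (4 * Q)"
    proof (rule ennreal_suminf_bound_add)
      fix N
      have "(\<Sum>j<N. ennreal (R j)) = ennreal (\<Sum>j<N. R j)" using Rnn by simp
      also have "\<dots> \<le> ennreal (4 * Q)" using partial by (rule ennreal_leI)
      finally show "(\<Sum>j<N. ennreal (R j)) + 0 \<le> ennreal (4 * Q)" by simp
    qed
    then show ?thesis by simp
  qed
  define T where "T = Suc (n + (\<Sum>i<n. v i))"
  have cT: "cpt v p < T" if "p \<in> PP n" for p unfolding T_def using that by (rule cpt_bound)
  have Qle: "Q \<le> (\<Sum>t<T. cp_term n x v (Suc t))"
  proof -
    have inner: "(\<Sum>t<T. if Suc t \<le> cpt v p then y p else 0) = y p * real (cpt v p)" if p: "p \<in> PP n" for p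
    proof -
      have "(\<Sum>t<T. if Suc t \<le> cpt v p then y p else 0) = (\<Sum>t\<in>{t\<in>{..<T}. Suc t \<le> cpt v p}. y p)"
        by (subst sum.inter_filter) auto
      also have "{t\<in>{..<T}. Suc t \<le> cpt v p} = {..<cpt v p}" using cT[OF p] by auto
      finally show ?thesis by simp
    qed
    have "Q = (\<Sum>p\<in>PP n. \<Sum>t<T. if Suc t \<le> cpt v p then y p else 0)"
      unfolding Q_def using inner by simp
    also have "\<dots> = (\<Sum>t<T. \<Sum>p\<in>PP n. if Suc t \<le> cpt v p then y p else 0)"
      by (rule sum.swap)
    also have "\<dots> \<le> (\<Sum>t<T. cp_term n x v (Suc t))"
      by (intro sum_mono ylow)
    finally show ?thesis .
  qed
  have cpnn: "0 \<le> cp_term n x v t" for t unfolding cp_term_def by simp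
  have "ennreal Q \<le> ennreal (\<Sum>t<T. cp_term n x v (Suc t))" using Qle by (rule ennreal_leI)
  also have "\<dots> = (\<Sum>t<T. ennreal (cp_term n x v (Suc t)))" using cpnn by simp
  also have "\<dots> \<le> (\<Sum>t. ennreal (cp_term n x v (Suc t)))" by (intro sum_le_suminf summableI) auto
  finally have Qsum: "ennreal Q \<le> (\<Sum>t. ennreal (cp_term n x v (Suc t)))" .
  have "ennreal (4 * Q) = 4 * ennreal Q" using Qnn by (simp add: ennreal_mult)
  also have "\<dots> \<le> 4 * (\<Sum>t. ennreal (cp_term n x v (Suc t)))" using Qsum by (rule mult_left_mono) simp
  finally have "ennreal (4 * Q) \<le> 4 * (\<Sum>t. ennreal (cp_term n x v (Suc t)))" .
  then show ?thesis using int sumR sumR2 by (meson order_trans)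
qed

definition ysig :: "nat list \<Rightarrow> nat \<Rightarrow> nat \<Rightarrow> real" where
  "ysig \<sigma> i t = (if 1 \<le> t \<and> t \<le> length \<sigma> \<and> \<sigma> ! (t - 1) = i then 1 else 0)"

lemma ysig_feasible: "cp_feasible n (ysig \<sigma>)"
  unfolding cp_feasible_def
proof (intro conjI ballI allI impI)
  fix i t show "0 \<le> ysig \<sigma> i t" by (simp add: ysig_def)
next
  fix t :: nat
  show "(\<Sum>i<n. ysig \<sigma> i t) \<le> 1"
  proof (cases "1 \<le> t \<and> t \<le> length \<sigma>")
    case True
    then have "(\<Sum>i<n. ysig \<sigma> i t) = (\<Sum>i<n. if \<sigma> ! (t - 1) = i then 1 else 0)"
      unfolding ysig_def by (intro sum.cong refl) auto
    also have "\<dots> = (if \<sigma> ! (t - 1) \<in> {..<n} then 1 else 0)" by (rule sum.delta') simp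
    finally show ?thesis by simp
  next
    case False
    then have "(\<Sum>i<n. ysig \<sigma> i t) = (\<Sum>i<n. 0)"
      unfolding ysig_def by (intro sum.cong refl) auto
    then show ?thesis by simp
  qed
qed

lemma alg_bound:
  assumes vo: "valid_order n \<sigma>" and vs: "valid_stop n \<sigma> stop"
  shows "(\<Sum>t. ennreal (cp_term n (ysig \<sigma>) v (Suc t))) \<le> ennreal (real (pa_cost \<sigma> stop v))"
proof -
  have len: "length \<sigma> = n"
    using vo unfolding valid_order_def by (metis card_lessThan distinct_card)
  have setS: "set \<sigma> = {..<n}" using vo unfolding valid_order_def by simp
  define s where "s = stop v"
  have s1: "1 \<le> s" and sn: "s \<le> n" using vs unfolding valid_stop_def s_def by auto
  define A where "A = (\<lambda>j. v (\<sigma> ! j)) ` {..<s}"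
  have "0 \<in> {..<s}" using s1 by simp
  then have "A \<noteq> {}" unfolding A_def by blast
  then have "Min A \<in> A" unfolding A_def by (intro Min_in) auto
  then obtain j0 where j0: "j0 < s" "v (\<sigma> ! j0) = Min A" unfolding A_def by auto
  define m where "m = Suc j0 + v (\<sigma> ! j0)"
  have mle: "m \<le> pa_cost \<sigma> stop v"
    unfolding pa_cost_def m_def s_def[symmetric] A_def[symmetric] using j0 by simp
  let ?y = "ysig \<sigma>"
  have XXnn: "0 \<le> XX n ?y v t" for t unfolding XX_def ysig_def by (intro sum_nonneg) auto
  have le1: "cp_term n ?y v t \<le> 1" for t unfolding cp_term_XX using XXnn[of t] by simp
  have zero: "cp_term n ?y v t = 0" if "m < t" for t
  proof -
    define p0 where "p0 = (\<sigma> ! j0, Suc j0)"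
    have "\<sigma> ! j0 \<in> set \<sigma>" using j0 sn len by simp
    then have p0: "p0 \<in> PP n" using j0 sn unfolding p0_def PP_def setS by auto
    have "(if cpt v p0 < t then ?y (fst p0) (snd p0) else 0) = 1"
      using that j0 sn len unfolding p0_def cpt_def m_def ysig_def by auto
    moreover have "(if cpt v p0 < t then ?y (fst p0) (snd p0) else 0) \<le> XX n ?y v t"
      unfolding XX_def using p0 by (intro member_le_sum) (auto simp: ysig_def)
    ultimately have "1 \<le> XX n ?y v t" by simp
    then show ?thesis unfolding cp_term_XX by simp
  qed
  have "(\<Sum>t. ennreal (cp_term n ?y v (Suc t))) = (\<Sum>t<m. ennreal (cp_term n ?y v (Suc t)))"
    by (rule suminf_finite) (auto simp: zero)
  also have "\<dots> \<le> (\<Sum>t<m. 1)" by (intro sum_mono) (simp add: le1)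
  also have "\<dots> = ennreal (real m)" by (simp add: ennreal_of_nat_eq_real_of_nat)
  also have "\<dots> \<le> ennreal (real (pa_cost \<sigma> stop v))" using mle by (intro ennreal_leI) simp
  finally show ?thesis .
qed

lemma cp_le_OPT:
  assumes "cp_optimal n D x"
  shows "cp_obj n D x \<le> OPT n D"
  unfolding OPT_def
proof (rule INF_greatest)
  fix p assume "p \<in> {(\<sigma>, stop). valid_order n \<sigma> \<and> valid_stop n \<sigma> stop}"
  then obtain \<sigma> stop where p: "p = (\<sigma>, stop)" "valid_order n \<sigma>" "valid_stop n \<sigma> stop" by auto
  have "cp_obj n D x \<le> cp_obj n D (ysig \<sigma>)"
    using assms ysig_feasible unfolding cp_optimal_def by blast
  also have "\<dots> \<le> (\<integral>\<^sup>+ v. ennreal (real (pa_cost \<sigma> stop v)) \<partial>measure_pmf D)"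
    unfolding cp_obj_def by (intro nn_integral_mono alg_bound p)
  finally show "cp_obj n D x \<le> (\<integral>\<^sup>+ v. ennreal (real (pa_cost (fst p) (snd p) v)) \<partial>measure_pmf D)"
    using p by simp
qed

theorem theorem3p6:
  fixes n :: nat and D :: "(nat \<Rightarrow> nat) pmf" and x :: "nat \<Rightarrow> nat \<Rightarrow> real"
  assumes "n \<ge> 1"
    and "\<forall>v\<in>set_pmf D. \<forall>i<n. v i > 0 \<and> even (v i)"
    and "cp_optimal n D x"
  shows "alg_cost n D x \<le> 4 * OPT n D"
proof -
  have feas: "cp_feasible n x" using assms(3) unfolding cp_optimal_def by simp
  have "alg_cost n D x \<le> (\<integral>\<^sup>+ v. 4 * (\<Sum>t. ennreal (cp_term n x v (Suc t))) \<partial>measure_pmf D)"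
    unfolding alg_cost_def by (intro nn_integral_mono per_v assms(1) feas)
  also have "\<dots> = 4 * cp_obj n D x"
    unfolding cp_obj_def by (rule nn_integral_cmult) simp
  also have "\<dots> \<le> 4 * OPT n D"
    using cp_le_OPT[OF assms(3)] by (rule mult_left_mono) simp
  finally show ?thesis .
qed

end
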